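(* Fix $N\in\mathbb{N}$. Let $\mathrm{WCM}_N$ be the random directed multigraph on $[N]$ with $x_{ij}=1_{\{U_i^1=j\}}+1_{\{U_i^2=j\}}$ directed edges from $i$ to $j$, where $(U_i^1,U_i^2)_{i\in[N]}$ are $2N$ independent uniform random variables on $[N]$. Let $(Y_1,\dots,Y_N)$ be multinomially distributed with $2N$ trials and $N$ categories each of probability $1/N$, and given $(Y_i)$, let $\mathrm{DCM}_N(d^-,d^+)$ be the directed configuration model with out-degrees $d_i^+=2$ and in-degrees $d_i^-=Y_i$ for all $i\in[N]$. Then $\mathrm{WCM}_N$ is equal in law to this (randomized) $\mathrm{DCM}_N(d^-,d^+)$.
   Context: Directed configuration model: given in-degrees $(d_i^-)$ and out-degrees $(d_i^+)$ on $[N]$ with $\sum_i d_i^-=\sum_i d_i^+=s$, give vertex $i$ a set of $d_i^+$ out-half-edges and $d_i^-$ in-half-edges. Enumerating all $s$ out-half-edges in some order, match the first one with a uniformly chosen in-half-edge, the second with a uniformly chosen remaining in-half-edge, and so on (equivalently, a uniform bijection between out- and in-half-edges). The resulting multigraph $\mathrm{DCM}_N(d^-,d^+)$ has one directed edge from $i$ to $j$ for each out-half-edge of $i$ matched with an in-half-edge of $j$ (loops and multiple edges allowed). Digraphs are identified with their matrices $(x_{ij})$ of edge multiplicities. *)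

theory Defs
  imports "HOL-Probability.Probability"
begin

text \<open>Vertices are {..<N} (0-indexed version of [N]). A directed multigraph is
  identified with its matrix of edge multiplicities, a function nat => nat => nat that
  vanishes outside {..<N} x {..<N}.\<close>

definition multinomial_unif_pmf :: "nat \<Rightarrow> nat \<Rightarrow> (nat \<Rightarrow> nat) pmf" where
  "multinomial_unif_pmf n N = embed_pmf (\<lambda>y.
     if (\<forall>i. i \<ge> N \<longrightarrow> y i = 0) \<and> (\<Sum>i<N. y i) = n
     then real (fact n) / (\<Prod>i<N. real (fact (y i))) * (1 / real N) ^ n
     else 0)"

definition half_edges :: "nat \<Rightarrow> (nat \<Rightarrow> nat) \<Rightarrow> (nat \<times> nat) set" where
  "half_edges N d = {(i, k). i < N \<and> k < d i}"

definition DCM :: "nat \<Rightarrow> (nat \<Rightarrow> nat) \<Rightarrow> (nat \<Rightarrow> nat) \<Rightarrow> (nat \<Rightarrow> nat \<Rightarrow> nat) pmf" where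
  "DCM N dminus dplus =
     map_pmf (\<lambda>\<sigma> i j. card {h \<in> half_edges N dplus. fst h = i \<and> fst (\<sigma> h) = j})
       (pmf_of_set {\<sigma> \<in> half_edges N dplus \<rightarrow>\<^sub>E half_edges N dminus.
                       bij_betw \<sigma> (half_edges N dplus) (half_edges N dminus)})"

definition WCM :: "nat \<Rightarrow> (nat \<Rightarrow> nat \<Rightarrow> nat) pmf" where
  "WCM N =
     map_pmf (\<lambda>U i j. if i < N \<and> j < N
                       then (if U (i, 1::nat) = j then 1 else 0) + (if U (i, 2) = j then 1 else 0)
                       else 0)
       (Pi_pmf ({..<N} \<times> {1, 2}) 0 (\<lambda>_. pmf_of_set {..<N}))"

end

theory Submission imports Defs "HOL-Combinatorics.Permutations" begin

lemma card_bij_ext: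
  assumes fA: "finite A" and fB: "finite B" and c: "card A = card B"
  shows "card {f \<in> A \<rightarrow>\<^sub>E B. bij_betw f A B} = fact (card A)"
proof -
  obtain g where g: "bij_betw g B A"
    using finite_same_card_bij[OF fB fA] c by metis
  have ig: "bij_betw (inv_into B g) A B" using g by (rule bij_betw_inv_into)
  have inj: "inj_on g B" using g by (auto simp: bij_betw_def)
  have gB: "g ` B = A" using g by (auto simp: bij_betw_def)
  define \<Phi> where "\<Phi> f = (\<lambda>x. if x \<in> A then g (f x) else x)" for f :: "'a \<Rightarrow> 'b"
  define \<Psi> where "\<Psi> p = restrict (\<lambda>x. inv_into B g (p x)) A" for p
  have "bij_betw \<Phi> {f \<in> A \<rightarrow>\<^sub>E B. bij_betw f A B} {p. p permutes A}"
  proof (rule bij_betw_byWitness[where f'=\<Psi>])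
    show "\<forall>a\<in>{f \<in> A \<rightarrow>\<^sub>E B. bij_betw f A B}. \<Psi> (\<Phi> a) = a"
    proof
      fix f assume f: "f \<in> {f \<in> A \<rightarrow>\<^sub>E B. bij_betw f A B}"
      show "\<Psi> (\<Phi> f) = f"
      proof
        fix x show "\<Psi> (\<Phi> f) x = f x"
          using f inv_into_f_f[OF inj] by (auto simp: \<Psi>_def \<Phi>_def PiE_def extensional_def)
      qed
    qed
    show "\<forall>p\<in>{p. p permutes A}. \<Phi> (\<Psi> p) = p"
    proof
      fix p assume p: "p \<in> {p. p permutes A}"
      show "\<Phi> (\<Psi> p) = p"
      proof
        fix x show "\<Phi> (\<Psi> p) x = p x"
        proof (cases "x \<in> A")
          case True
          then have "p x \<in> A" using p by (simp add: permutes_in_image)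
          then have "g (inv_into B g (p x)) = p x" using f_inv_into_f[of "p x" g B] gB by simp
          then show ?thesis using True by (simp add: \<Psi>_def \<Phi>_def)
        next
          case False then show ?thesis using p by (simp add: \<Phi>_def permutes_not_in)
        qed
      qed
    qed
    show "\<Phi> ` {f \<in> A \<rightarrow>\<^sub>E B. bij_betw f A B} \<subseteq> {p. p permutes A}"
    proof
      fix q assume "q \<in> \<Phi> ` {f \<in> A \<rightarrow>\<^sub>E B. bij_betw f A B}"
      then obtain f where f: "f \<in> A \<rightarrow>\<^sub>E B" "bij_betw f A B" and q: "q = \<Phi> f" by auto
      have "bij_betw (g \<circ> f) A A" using f(2) g by (rule bij_betw_trans)
      moreover have "bij_betw q A A \<longleftrightarrow> bij_betw (g \<circ> f) A A" by (rule bij_betw_cong) (simp add: q \<Phi>_def)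
      ultimately have "bij_betw q A A" by simp
      then show "q \<in> {p. p permutes A}" by (auto intro!: bij_imp_permutes simp: q \<Phi>_def)
    qed
    show "\<Psi> ` {p. p permutes A} \<subseteq> {f \<in> A \<rightarrow>\<^sub>E B. bij_betw f A B}"
    proof
      fix q assume "q \<in> \<Psi> ` {p. p permutes A}"
      then obtain p where p: "p permutes A" and q: "q = \<Psi> p" by auto
      have bp: "bij_betw p A A" using p by (rule permutes_imp_bij)
      have "bij_betw (inv_into B g \<circ> p) A B" using bp ig by (rule bij_betw_trans)
      moreover have "bij_betw q A B \<longleftrightarrow> bij_betw (inv_into B g \<circ> p) A B" by (rule bij_betw_cong) (simp add: q \<Psi>_def)
      ultimately have "bij_betw q A B" by simp
      moreover have "q \<in> A \<rightarrow>\<^sub>E B"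
      proof -
        have "\<And>x. x \<in> A \<Longrightarrow> inv_into B g (p x) \<in> B"
          using bp ig by (meson bij_betw_apply)
        then show ?thesis by (simp add: q \<Psi>_def)
      qed
      ultimately show "q \<in> {f \<in> A \<rightarrow>\<^sub>E B. bij_betw f A B}" by auto
    qed
  qed
  then have "card {f \<in> A \<rightarrow>\<^sub>E B. bij_betw f A B} = card {p. p permutes A}"
    by (rule bij_betw_same_card)
  also have "\<dots> = fact (card A)" using card_permutations fA by blast
  finally show ?thesis .
qed


definition Out :: "nat \<Rightarrow> (nat \<times> nat) set" where "Out N = half_edges N (\<lambda>_. 2)"
definition cnt :: "nat \<Rightarrow> (nat \<times> nat \<Rightarrow> nat) \<Rightarrow> nat \<Rightarrow> nat" where
  "cnt N t = (\<lambda>j. card {h \<in> Out N. t h = j})"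
definition TT :: "nat \<Rightarrow> (nat \<times> nat \<Rightarrow> nat) set" where "TT N = Out N \<rightarrow>\<^sub>E {..<N}"
definition CC :: "nat \<Rightarrow> (nat \<Rightarrow> nat) \<Rightarrow> (nat \<times> nat \<Rightarrow> nat \<times> nat) set" where
  "CC N Y = {f \<in> Out N \<rightarrow>\<^sub>E half_edges N Y. bij_betw f (Out N) (half_edges N Y)}"
definition tof :: "nat \<Rightarrow> (nat \<times> nat \<Rightarrow> nat \<times> nat) \<Rightarrow> nat \<times> nat \<Rightarrow> nat" where
  "tof N \<sigma> = restrict (\<lambda>h. fst (\<sigma> h)) (Out N)"
definition SS :: "nat \<Rightarrow> (nat \<Rightarrow> nat) set" where
  "SS N = {Y. (\<forall>i. i \<ge> N \<longrightarrow> Y i = 0) \<and> (\<Sum>i<N. Y i) = 2 * N}"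

lemma half_edges_Sigma: "half_edges N d = Sigma {..<N} (\<lambda>i. {..<d i})"
  by (auto simp: half_edges_def)

lemma finite_half_edges[simp]: "finite (half_edges N d)"
  by (simp add: half_edges_Sigma)

lemma card_half_edges: "card (half_edges N d) = (\<Sum>i<N. d i)"
  by (simp add: half_edges_Sigma)

lemma finite_Out[simp]: "finite (Out N)" by (simp add: Out_def)
lemma card_Out: "card (Out N) = 2 * N" by (simp add: Out_def card_half_edges)

lemma finite_CC[simp]: "finite (CC N Y)"
  unfolding CC_def by (rule finite_subset[of _ "Out N \<rightarrow>\<^sub>E half_edges N Y"]) (auto intro: finite_PiE)

lemma finite_TT[simp]: "finite (TT N)"
  unfolding TT_def by (auto intro: finite_PiE)

lemma card_TT: "card (TT N) = N ^ (2 * N)"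
  unfolding TT_def by (simp add: card_PiE card_Out)

lemma card_CC: assumes "Y \<in> SS N" shows "card (CC N Y) = fact (2 * N)"
proof -
  have "card (half_edges N Y) = 2 * N" using assms by (simp add: card_half_edges SS_def)
  then show ?thesis unfolding CC_def using card_bij_ext[of "Out N" "half_edges N Y"]
    by (simp add: card_Out)
qed

lemma fst_fiber_half_edges:
  assumes "\<forall>i. i \<ge> N \<longrightarrow> Y i = 0"
  shows "card {p \<in> half_edges N Y. fst p = j} = Y j"
proof (cases "j < N")
  case True
  have "{p \<in> half_edges N Y. fst p = j} = Pair j ` {..<Y j}"
    using True by (auto simp: half_edges_def)
  then show ?thesis by (simp add: card_image inj_on_def)
next
  case False
  then have "{p \<in> half_edges N Y. fst p = j} = {}" by (auto simp: half_edges_def)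
  then show ?thesis using False assms by simp
qed

lemma tof_props:
  assumes s: "\<sigma> \<in> CC N Y" and Y: "\<forall>i. i \<ge> N \<longrightarrow> Y i = 0"
  shows "tof N \<sigma> \<in> TT N" "cnt N (tof N \<sigma>) = Y"
proof -
  have b: "bij_betw \<sigma> (Out N) (half_edges N Y)" and m: "\<sigma> \<in> Out N \<rightarrow>\<^sub>E half_edges N Y"
    using s by (auto simp: CC_def)
  have "\<And>h. h \<in> Out N \<Longrightarrow> fst (\<sigma> h) < N"
    using m by (force simp: half_edges_def)
  then show "tof N \<sigma> \<in> TT N" by (auto simp: tof_def TT_def)
  show "cnt N (tof N \<sigma>) = Y"
  proof
    fix j
    have e: "{h \<in> Out N. tof N \<sigma> h = j} = {h \<in> Out N. fst (\<sigma> h) = j}" by (auto simp: tof_def)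
    have img: "\<sigma> ` {h \<in> Out N. fst (\<sigma> h) = j} = {p \<in> half_edges N Y. fst p = j}"
    proof (intro equalityI subsetI)
      fix p assume "p \<in> \<sigma> ` {h \<in> Out N. fst (\<sigma> h) = j}"
      then show "p \<in> {p \<in> half_edges N Y. fst p = j}" using b by (auto simp: bij_betw_def)
    next
      fix p assume p: "p \<in> {p \<in> half_edges N Y. fst p = j}"
      have "p \<in> \<sigma> ` Out N" using p b by (simp add: bij_betw_def)
      then obtain h where "h \<in> Out N" "p = \<sigma> h" by blast
      then show "p \<in> \<sigma> ` {h \<in> Out N. fst (\<sigma> h) = j}" using p by auto
    qed
    have inj: "inj_on \<sigma> {h \<in> Out N. fst (\<sigma> h) = j}"
      using b unfolding bij_betw_def by (rule conjE) (erule inj_on_subset, blast)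
    have "card {h \<in> Out N. fst (\<sigma> h) = j} = card {p \<in> half_edges N Y. fst p = j}"
      using card_image[OF inj] unfolding img by simp
    then have "card {h \<in> Out N. tof N \<sigma> h = j} = Y j" unfolding e using fst_fiber_half_edges[OF Y] by simp
    then show "cnt N (tof N \<sigma>) j = Y j" unfolding cnt_def .
  qed
qed


lemma TT_support: assumes "t \<in> TT N" shows "\<forall>i. i \<ge> N \<longrightarrow> cnt N t i = 0"
proof (intro allI impI)
  fix i assume i: "i \<ge> N"
  have "{h \<in> Out N. t h = i} = {}" using assms i by (force simp: TT_def)
  then show "cnt N t i = 0" by (simp add: cnt_def)
qed

lemma card_Fib:
  assumes t: "t \<in> TT N" and Y: "cnt N t = Y"
  shows "card {\<sigma> \<in> CC N Y. tof N \<sigma> = t} = (\<Prod>j<N. fact (Y j))"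
proof -
  have supp: "\<forall>i. i \<ge> N \<longrightarrow> Y i = 0" using TT_support[OF t] Y by simp
  define P where "P j = {h \<in> Out N. t h = j}" for j
  define Q where "Q j = {p \<in> half_edges N Y. fst p = j}" for j
  define F where "F = {\<sigma> \<in> CC N Y. tof N \<sigma> = t}"
  define G where "G = (\<Pi>\<^sub>E j\<in>{..<N}. {f \<in> P j \<rightarrow>\<^sub>E Q j. bij_betw f (P j) (Q j)})"
  define \<Phi> where "\<Phi> \<sigma> = (\<lambda>j\<in>{..<N}. restrict \<sigma> (P j))" for \<sigma> :: "nat \<times> nat \<Rightarrow> nat \<times> nat"
  define \<Psi> where "\<Psi> \<phi> = (\<lambda>h\<in>Out N. \<phi> (t h) h)" for \<phi> :: "nat \<Rightarrow> nat \<times> nat \<Rightarrow> nat \<times> nat"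
  have tN: "\<And>h. h \<in> Out N \<Longrightarrow> t h < N" using t by (auto simp: TT_def)
  have tU: "\<And>h. h \<notin> Out N \<Longrightarrow> t h = undefined" using t by (auto simp: TT_def)
  have hP: "\<And>h. h \<in> Out N \<Longrightarrow> h \<in> P (t h)" by (simp add: P_def)
  have QI: "\<And>j. Q j \<subseteq> half_edges N Y" by (auto simp: Q_def)
  have Ffacts: "\<And>\<sigma>. \<sigma> \<in> F \<Longrightarrow> \<sigma> \<in> Out N \<rightarrow>\<^sub>E half_edges N Y \<and> bij_betw \<sigma> (Out N) (half_edges N Y)
       \<and> (\<forall>h\<in>Out N. fst (\<sigma> h) = t h)"
  proof -
    fix \<sigma> assume "\<sigma> \<in> F"
    then have s: "\<sigma> \<in> CC N Y" "tof N \<sigma> = t" by (auto simp: F_def)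
    have "\<forall>h\<in>Out N. fst (\<sigma> h) = t h"
    proof
      fix h assume h: "h \<in> Out N"
      have "tof N \<sigma> h = t h" using s by simp
      then show "fst (\<sigma> h) = t h" using h by (simp add: tof_def)
    qed
    then show "\<sigma> \<in> Out N \<rightarrow>\<^sub>E half_edges N Y \<and> bij_betw \<sigma> (Out N) (half_edges N Y)
       \<and> (\<forall>h\<in>Out N. fst (\<sigma> h) = t h)" using s by (simp add: CC_def)
  qed
  have Gfacts: "\<And>\<phi> j. \<phi> \<in> G \<Longrightarrow> j < N \<Longrightarrow> \<phi> j \<in> P j \<rightarrow>\<^sub>E Q j \<and> bij_betw (\<phi> j) (P j) (Q j)"
    by (auto simp: G_def)
  have GU: "\<And>\<phi> j. \<phi> \<in> G \<Longrightarrow> \<not> j < N \<Longrightarrow> \<phi> j = undefined"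
    by (auto simp: G_def)
  have "bij_betw \<Phi> F G"
  proof (rule bij_betw_byWitness[where f'=\<Psi>])
    show "\<forall>\<sigma>\<in>F. \<Psi> (\<Phi> \<sigma>) = \<sigma>"
    proof
      fix \<sigma> assume s: "\<sigma> \<in> F"
      show "\<Psi> (\<Phi> \<sigma>) = \<sigma>"
      proof
        fix h show "\<Psi> (\<Phi> \<sigma>) h = \<sigma> h"
        proof (cases "h \<in> Out N")
          case True
          then show ?thesis using tN[OF True] hP[OF True] by (simp add: \<Psi>_def \<Phi>_def)
        next
          case False
          have "\<sigma> h = undefined" using Ffacts[OF s] False by (meson PiE_arb)
          then show ?thesis using False by (simp add: \<Psi>_def)
        qed
      qed
    qed
    show "\<forall>\<phi>\<in>G. \<Phi> (\<Psi> \<phi>) = \<phi>"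
    proof
      fix \<phi> assume p: "\<phi> \<in> G"
      show "\<Phi> (\<Psi> \<phi>) = \<phi>"
      proof
        fix j show "\<Phi> (\<Psi> \<phi>) j = \<phi> j"
        proof (cases "j < N")
          case True
          show ?thesis
          proof
            fix h show "\<Phi> (\<Psi> \<phi>) j h = \<phi> j h"
            proof (cases "h \<in> P j")
              case hj: True
              then have "h \<in> Out N" "t h = j" by (auto simp: P_def)
              then show ?thesis using True hj by (simp add: \<Phi>_def \<Psi>_def)
            next
              case hj: False
              have "\<phi> j h = undefined" using Gfacts[OF p True] hj by (meson PiE_arb)
              then show ?thesis using True hj by (simp add: \<Phi>_def)
            qed
          qed
        next
          case False
          then show ?thesis using GU[OF p False] by (simp add: \<Phi>_def)
        qed
      qed
    qed
    show "\<Phi> ` F \<subseteq> G"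
    proof
      fix x assume "x \<in> \<Phi> ` F"
      then obtain \<sigma> where s: "\<sigma> \<in> F" and x: "x = \<Phi> \<sigma>" by auto
      note sf = Ffacts[OF s]
      have "restrict \<sigma> (P j) \<in> {f \<in> P j \<rightarrow>\<^sub>E Q j. bij_betw f (P j) (Q j)}" if j: "j < N" for j
      proof -
        have PO: "P j \<subseteq> Out N" by (auto simp: P_def)
        have inj: "inj_on \<sigma> (P j)" using sf PO by (auto simp: bij_betw_def intro: inj_on_subset)
        have im: "\<sigma> ` P j = Q j"
        proof (intro equalityI subsetI)
          fix p assume "p \<in> \<sigma> ` P j"
          then obtain h where h: "h \<in> P j" "p = \<sigma> h" by blast
          then have "h \<in> Out N" "t h = j" by (auto simp: P_def)
          then show "p \<in> Q j" using sf h by (auto simp: Q_def bij_betw_def)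
        next
          fix p assume p: "p \<in> Q j"
          then have "p \<in> \<sigma> ` Out N" using sf by (auto simp: Q_def bij_betw_def)
          then obtain h where h: "h \<in> Out N" "p = \<sigma> h" by blast
          then have "t h = j" using sf p by (auto simp: Q_def)
          then show "p \<in> \<sigma> ` P j" using h by (auto simp: P_def)
        qed
        have b1: "bij_betw \<sigma> (P j) (Q j)" using inj im by (simp add: bij_betw_def)
        have "bij_betw (restrict \<sigma> (P j)) (P j) (Q j) \<longleftrightarrow> bij_betw \<sigma> (P j) (Q j)"
          by (rule bij_betw_cong) simp
        then have b2: "bij_betw (restrict \<sigma> (P j)) (P j) (Q j)" using b1 by simp
        have "restrict \<sigma> (P j) \<in> P j \<rightarrow>\<^sub>E Q j" using im by auto
        then show ?thesis using b2 by simp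
      qed
      then show "x \<in> G" unfolding x G_def \<Phi>_def by (auto simp: PiE_iff)
    qed
    show "\<Psi> ` G \<subseteq> F"
    proof
      fix x assume "x \<in> \<Psi> ` G"
      then obtain \<phi> where pG: "\<phi> \<in> G" and x: "x = \<Psi> \<phi>" by auto
      note p = pG
      have val: "\<Psi> \<phi> h \<in> Q (t h)" if h: "h \<in> Out N" for h
      proof -
        have "\<phi> (t h) \<in> P (t h) \<rightarrow>\<^sub>E Q (t h)" using Gfacts[OF p tN[OF h]] by simp
        then show ?thesis using hP[OF h] h by (auto simp: \<Psi>_def)
      qed
      have fstv: "fst (\<Psi> \<phi> h) = t h" if h: "h \<in> Out N" for h
        using val[OF h] by (simp add: Q_def)
      have m: "\<Psi> \<phi> \<in> Out N \<rightarrow>\<^sub>E half_edges N Y"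
        using val QI by (auto simp: \<Psi>_def)
      have inj: "inj_on (\<Psi> \<phi>) (Out N)"
      proof (rule inj_onI)
        fix h h' assume h: "h \<in> Out N" and h': "h' \<in> Out N" and e: "\<Psi> \<phi> h = \<Psi> \<phi> h'"
        have tt: "t h = t h'" using fstv[OF h] fstv[OF h'] e by simp
        have "inj_on (\<phi> (t h)) (P (t h))" using Gfacts[OF p tN[OF h]] by (simp add: bij_betw_def)
        moreover have "\<phi> (t h) h = \<phi> (t h) h'" using e tt h h' by (simp add: \<Psi>_def)
        ultimately show "h = h'" using hP[OF h] hP[OF h'] tt by (auto dest: inj_onD)
      qed
      have surj: "\<Psi> \<phi> ` Out N = half_edges N Y"
      proof (intro equalityI subsetI)
        fix p assume "p \<in> \<Psi> \<phi> ` Out N" then show "p \<in> half_edges N Y" using m by auto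
      next
        fix p assume p: "p \<in> half_edges N Y"
        define j where "j = fst p"
        have jN: "j < N" using p by (auto simp: half_edges_def j_def)
        have "p \<in> Q j" using p by (simp add: Q_def j_def)
        then have "p \<in> \<phi> j ` P j" using Gfacts[OF pG jN] by (simp add: bij_betw_def)
        then obtain h where h: "h \<in> P j" "p = \<phi> j h" by blast
        then have hO: "h \<in> Out N" and th: "t h = j" by (auto simp: P_def)
        have "\<Psi> \<phi> h = p" using h hO th by (simp add: \<Psi>_def)
        then show "p \<in> \<Psi> \<phi> ` Out N" using hO by blast
      qed
      have tofe: "tof N (\<Psi> \<phi>) = t"
      proof
        fix h show "tof N (\<Psi> \<phi>) h = t h"
          using fstv tU by (cases "h \<in> Out N") (auto simp: tof_def)
      qed
      show "x \<in> F" unfolding x F_def CC_def using m inj surj tofe by (simp add: bij_betw_def)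
    qed
  qed
  then have "card F = card G" by (rule bij_betw_same_card)
  also have "\<dots> = (\<Prod>j<N. card {f \<in> P j \<rightarrow>\<^sub>E Q j. bij_betw f (P j) (Q j)})"
    unfolding G_def by (simp add: card_PiE)
  also have "\<dots> = (\<Prod>j<N. fact (Y j))"
  proof (rule prod.cong[OF refl])
    fix j assume "j \<in> {..<N}"
    have cP: "card (P j) = Y j" using Y[symmetric] by (simp add: cnt_def P_def)
    have cQ: "card (Q j) = Y j" using fst_fiber_half_edges[OF supp] by (simp add: Q_def)
    have "finite (P j)" by (simp add: P_def)
    moreover have "finite (Q j)" by (simp add: Q_def)
    ultimately show "card {f \<in> P j \<rightarrow>\<^sub>E Q j. bij_betw f (P j) (Q j)} = fact (Y j)"
      using card_bij_ext[of "P j" "Q j"] cP cQ by simp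
  qed
  finally show ?thesis by (simp add: F_def)
qed


lemma cnt_SS: assumes t: "t \<in> TT N" shows "cnt N t \<in> SS N"
proof -
  have "Out N = (\<Union>j\<in>{..<N}. {h \<in> Out N. t h = j})" using t by (auto simp: TT_def)
  then have "card (Out N) = card (\<Union>j\<in>{..<N}. {h \<in> Out N. t h = j})" by simp
  also have "\<dots> = (\<Sum>j<N. card {h \<in> Out N. t h = j})"
    by (rule card_UN_disjoint) auto
  finally have "(\<Sum>j<N. cnt N t j) = 2 * N" by (simp add: cnt_def card_Out)
  then show ?thesis using TT_support[OF t] by (simp add: SS_def)
qed

lemma card_TY:
  assumes Y: "Y \<in> SS N"
  shows "card {t \<in> TT N. cnt N t = Y} * (\<Prod>j<N. fact (Y j)) = fact (2 * N)"
proof -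
  have supp: "\<forall>i. i \<ge> N \<longrightarrow> Y i = 0" using Y by (simp add: SS_def)
  have "CC N Y = (\<Union>t\<in>{t \<in> TT N. cnt N t = Y}. {\<sigma> \<in> CC N Y. tof N \<sigma> = t})"
    using tof_props[OF _ supp] by auto
  then have "card (CC N Y) = card (\<Union>t\<in>{t \<in> TT N. cnt N t = Y}. {\<sigma> \<in> CC N Y. tof N \<sigma> = t})"
    by simp
  also have "\<dots> = (\<Sum>t\<in>{t \<in> TT N. cnt N t = Y}. card {\<sigma> \<in> CC N Y. tof N \<sigma> = t})"
    by (rule card_UN_disjoint) auto
  also have "\<dots> = (\<Sum>t\<in>{t \<in> TT N. cnt N t = Y}. (\<Prod>j<N. fact (Y j)))"
    by (rule sum.cong[OF refl]) (simp add: card_Fib)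
  finally show ?thesis using card_CC[OF Y] by simp
qed

lemma SS_eq: "SS N = cnt N ` TT N"
proof (intro equalityI subsetI)
  fix Y assume Y: "Y \<in> SS N"
  have "card {t \<in> TT N. cnt N t = Y} * (\<Prod>j<N. fact (Y j)) \<noteq> 0"
    using card_TY[OF Y] by simp
  then have "card {t \<in> TT N. cnt N t = Y} \<noteq> 0" by auto
  then have "{t \<in> TT N. cnt N t = Y} \<noteq> {}" by (intro notI) simp
  then obtain t where "t \<in> TT N" "cnt N t = Y" by blast
  then show "Y \<in> cnt N ` TT N" by blast
next
  fix Y assume "Y \<in> cnt N ` TT N" then show "Y \<in> SS N" using cnt_SS by blast
qed

definition Mx :: "nat \<Rightarrow> (nat \<times> nat \<Rightarrow> nat) \<Rightarrow> nat \<Rightarrow> nat \<Rightarrow> nat" where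
  "Mx N t = (\<lambda>i j. card {h \<in> Out N. fst h = i \<and> t h = j})"

lemma DCM_eq: "DCM N Y (\<lambda>_. 2) = map_pmf (Mx N) (map_pmf (tof N) (pmf_of_set (CC N Y)))"
  unfolding DCM_def map_pmf_comp CC_def
proof (rule map_pmf_cong)
  show "pmf_of_set {\<sigma> \<in> half_edges N (\<lambda>_. 2) \<rightarrow>\<^sub>E half_edges N Y. bij_betw \<sigma> (half_edges N (\<lambda>_. 2)) (half_edges N Y)}
    = pmf_of_set {f \<in> Out N \<rightarrow>\<^sub>E half_edges N Y. bij_betw f (Out N) (half_edges N Y)}"
    by (simp add: Out_def)
next
  fix \<sigma>
  show "(\<lambda>i j. card {h \<in> half_edges N (\<lambda>_. 2). fst h = i \<and> fst (\<sigma> h) = j}) = Mx N (tof N \<sigma>)"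
  proof (intro ext)
    fix i j
    have "{h \<in> half_edges N (\<lambda>_. 2). fst h = i \<and> fst (\<sigma> h) = j} = {h \<in> Out N. fst h = i \<and> tof N \<sigma> h = j}"
      by (auto simp: tof_def Out_def)
    then show "card {h \<in> half_edges N (\<lambda>_. 2). fst h = i \<and> fst (\<sigma> h) = j} = Mx N (tof N \<sigma>) i j"
      by (simp add: Mx_def)
  qed
qed

lemma WCM_eq: assumes N: "N \<ge> 1" shows "WCM N = map_pmf (Mx N) (pmf_of_set (TT N))"
proof -
  define A where "A = {..<N} \<times> {1::nat, 2}"
  define D where "D = PiE_dflt A (0::nat) (\<lambda>_. {..<N})"
  define r where "r U = (\<lambda>h\<in>Out N. U (fst h, snd h + 1))" for U :: "nat \<times> nat \<Rightarrow> nat"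
  have fA: "finite A" by (simp add: A_def)
  have ne: "{..<N} \<noteq> {}"
  proof -
    have "0 \<in> {..<N}" using N by simp
    then show ?thesis by blast
  qed
  have P: "Pi_pmf A 0 (\<lambda>_. pmf_of_set {..<N}) = pmf_of_set D"
    unfolding D_def by (rule Pi_pmf_of_set) (use fA ne in auto)
  have fD: "finite D" unfolding D_def by (rule finite_PiE_dflt) (auto simp: fA)
  have Dne: "D \<noteq> {}"
  proof -
    have "(\<lambda>_. 0) \<in> D" using N by (auto simp: D_def PiE_dflt_def)
    then show ?thesis by auto
  qed
  have OutE: "h \<in> Out N \<longleftrightarrow> fst h < N \<and> snd h < 2" for h
    by (cases h) (auto simp: Out_def half_edges_def)
  have inj: "inj_on r D"
  proof (rule inj_onI)
    fix U U' assume U: "U \<in> D" and U': "U' \<in> D" and e: "r U = r U'"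
    show "U = U'"
    proof
      fix x show "U x = U' x"
      proof (cases "x \<in> A")
        case True
        then obtain i k where x: "x = (i, k)" "i < N" "k = 1 \<or> k = 2" by (auto simp: A_def)
        have h: "(i, k - 1) \<in> Out N" using x by (auto simp: OutE)
        have "r U (i, k - 1) = r U' (i, k - 1)" using e by simp
        then show ?thesis using h x by (auto simp: r_def numeral_2_eq_2)
      next
        case False
        have "U x = 0" "U' x = 0" using U U' False unfolding D_def PiE_dflt_def by blast+
        then show ?thesis by simp
      qed
    qed
  qed
  have img: "r ` D = TT N"
  proof (intro equalityI subsetI)
    fix t assume "t \<in> r ` D"
    then obtain U where U: "U \<in> D" "t = r U" by blast
    have "U (fst h, snd h + 1) < N" if "h \<in> Out N" for h
    proof -
      have "(fst h, snd h + 1) \<in> A" using that by (auto simp: OutE A_def)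
      then show ?thesis using U by (auto simp: D_def PiE_dflt_def)
    qed
    then show "t \<in> TT N" using U by (auto simp: TT_def r_def)
  next
    fix t assume t: "t \<in> TT N"
    define U where "U x = (if x \<in> A then t (fst x, snd x - 1) else 0)" for x
    have "U \<in> D"
    proof -
      have "t (fst x, snd x - 1) < N" if "x \<in> A" for x
      proof -
        have "(fst x, snd x - 1) \<in> Out N" using that by (auto simp: OutE A_def)
        then show ?thesis using t by (auto simp: TT_def)
      qed
      then show ?thesis by (auto simp: D_def PiE_dflt_def U_def)
    qed
    moreover have "r U = t"
    proof
      fix h show "r U h = t h"
      proof (cases "h \<in> Out N")
        case True
        then have "(fst h, snd h + 1) \<in> A" by (auto simp: OutE A_def)
        then show ?thesis using True by (simp add: r_def U_def)
      next
        case False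
        have "t h = undefined" using t False unfolding TT_def by (meson PiE_arb)
        then show ?thesis using False by (simp add: r_def)
      qed
    qed
    ultimately show "t \<in> r ` D" by blast
  qed
  have M: "(\<lambda>U i j. if i < N \<and> j < N
              then (if U (i, 1::nat) = j then 1 else 0) + (if U (i, 2) = j then 1 else 0) else 0) U
           = Mx N (r U)" if U: "U \<in> D" for U
  proof (intro ext)
    fix i j
    have UA: "\<And>x. x \<in> A \<Longrightarrow> U x < N" using U by (auto simp: D_def PiE_dflt_def)
    have set: "{h \<in> Out N. fst h = i \<and> r U h = j} =
      (if i < N \<and> U (i, 1) = j then {(i, 0)} else {}) \<union> (if i < N \<and> U (i, 2) = j then {(i, 1)} else {})"
    proof (intro equalityI subsetI)
      fix h assume h: "h \<in> {h \<in> Out N. fst h = i \<and> r U h = j}"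
      obtain a b where hab: "h = (a, b)" by (cases h)
      have "a = i" "a < N" "b < 2" "U (a, b + 1) = j" using h by (auto simp: hab OutE r_def)
      then show "h \<in> (if i < N \<and> U (i, 1) = j then {(i, 0)} else {}) \<union> (if i < N \<and> U (i, 2) = j then {(i, 1)} else {})"
        by (cases b) (auto simp: hab numeral_2_eq_2)
    next
      fix h :: "nat \<times> nat" assume "h \<in> (if i < N \<and> U (i, 1) = j then {(i, 0)} else {}) \<union> (if i < N \<and> U (i, 2) = j then {(i, 1)} else {})"
      then show "h \<in> {h \<in> Out N. fst h = i \<and> r U h = j}"
        by (auto simp: OutE r_def numeral_2_eq_2 split: if_splits)
    qed
    have "(1::nat, 2::nat) = (1, 2)" by simp
    show "(if i < N \<and> j < N then (if U (i, 1::nat) = j then 1 else 0) + (if U (i, 2) = j then 1 else 0) else 0)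
          = Mx N (r U) i j"
    proof (cases "i < N")
      case True
      have "U (i, 1) < N" "U (i, 2) < N" using True by (auto intro!: UA simp: A_def)
      then show ?thesis unfolding Mx_def set using True by auto
    next
      case False then show ?thesis unfolding Mx_def set by simp
    qed
  qed
  have "WCM N = map_pmf (\<lambda>U i j. if i < N \<and> j < N
              then (if U (i, 1::nat) = j then 1 else 0) + (if U (i, 2) = j then 1 else 0) else 0)
              (pmf_of_set D)"
    unfolding WCM_def using P by (simp add: A_def)
  also have "\<dots> = map_pmf (\<lambda>U. Mx N (r U)) (pmf_of_set D)"
  proof (rule map_pmf_cong[OF refl])
    fix U assume "U \<in> set_pmf (pmf_of_set D)"
    then have "U \<in> D" using fD Dne by simp
    then show "(\<lambda>i j. if i < N \<and> j < N
              then (if U (i, 1::nat) = j then 1 else 0) + (if U (i, 2) = j then 1 else 0) else 0) = Mx N (r U)"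
      using M by simp
  qed
  also have "\<dots> = map_pmf (Mx N) (map_pmf r (pmf_of_set D))" by (simp add: map_pmf_comp)
  also have "map_pmf r (pmf_of_set D) = pmf_of_set (TT N)"
    using map_pmf_of_set_inj[OF inj Dne fD] img by simp
  finally show ?thesis .
qed


definition mf :: "nat \<Rightarrow> (nat \<Rightarrow> nat) \<Rightarrow> real" where
  "mf N y = (if (\<forall>i. i \<ge> N \<longrightarrow> y i = 0) \<and> (\<Sum>i<N. y i) = 2 * N
     then real (fact (2 * N)) / (\<Prod>i<N. real (fact (y i))) * (1 / real N) ^ (2 * N)
     else 0)"

lemma mf_SS: "Y \<in> SS N \<Longrightarrow> mf N Y = real (card {t \<in> TT N. cnt N t = Y}) / real (card (TT N))"
proof -
  assume Y: "Y \<in> SS N"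
  have c: "real (card {t \<in> TT N. cnt N t = Y}) * (\<Prod>i<N. real (fact (Y i))) = real (fact (2 * N))"
    using arg_cong[OF card_TY[OF Y], of real] by (simp add: of_nat_prod)
  have pos: "(\<Prod>i<N. real (fact (Y i))) > 0" by (intro prod_pos) simp
  have "mf N Y = real (fact (2 * N)) / (\<Prod>i<N. real (fact (Y i))) * (1 / real N) ^ (2 * N)"
    using Y by (simp add: mf_def SS_def)
  also have "real (fact (2 * N)) / (\<Prod>i<N. real (fact (Y i))) = real (card {t \<in> TT N. cnt N t = Y})"
    using c pos by (simp add: field_simps)
  also have "(1 / real N) ^ (2 * N) = 1 / real (card (TT N))"
    by (simp add: card_TT power_one_over)
  finally show ?thesis by simp
qed

lemma mf_nonneg: "0 \<le> mf N Y"
  unfolding mf_def by (auto intro!: mult_nonneg_nonneg divide_nonneg_nonneg prod_nonneg zero_le_power)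

lemma mf_not_SS: assumes "Y \<notin> SS N" shows "mf N Y = 0"
proof -
  have "\<not> ((\<forall>i. i \<ge> N \<longrightarrow> Y i = 0) \<and> (\<Sum>i<N. Y i) = 2 * N)" using assms by (simp add: SS_def)
  then show ?thesis unfolding mf_def by (rule if_not_P)
qed

lemma mult_eq: "multinomial_unif_pmf (2 * N) N = embed_pmf (mf N)"
  unfolding multinomial_unif_pmf_def mf_def by simp

lemma pmf_mult:
  assumes N: "N \<ge> 1"
  shows "pmf (multinomial_unif_pmf (2 * N) N) Y = mf N Y"
  unfolding mult_eq
proof (rule pmf_embed_pmf)
  fix x show "0 \<le> mf N x" by (rule mf_nonneg)
next
  have fS: "finite (SS N)" by (simp add: SS_eq)
  have "(\<integral>\<^sup>+ x. ennreal (mf N x) \<partial>count_space UNIV) = (\<Sum>x\<in>SS N. ennreal (mf N x))"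
    by (rule nn_integral_count_space'[OF fS]) (auto simp: mf_not_SS)
  also have "\<dots> = ennreal (\<Sum>x\<in>SS N. mf N x)"
    by (rule sum_ennreal) (rule mf_nonneg)
  also have "(\<Sum>x\<in>SS N. mf N x) = (\<Sum>x\<in>SS N. real (card {t \<in> TT N. cnt N t = x})) / real (card (TT N))"
    by (simp add: mf_SS sum_divide_distrib)
  also have "(\<Sum>x\<in>SS N. real (card {t \<in> TT N. cnt N t = x})) = real (card (TT N))"
  proof -
    have "TT N = (\<Union>Y\<in>SS N. {t \<in> TT N. cnt N t = Y})" by (auto simp: SS_eq)
    then have "card (TT N) = card (\<Union>Y\<in>SS N. {t \<in> TT N. cnt N t = Y})" by simp
    also have "\<dots> = (\<Sum>Y\<in>SS N. card {t \<in> TT N. cnt N t = Y})"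
      by (rule card_UN_disjoint) (auto simp: fS)
    finally show ?thesis by (simp add: of_nat_sum)
  qed
  finally have eq: "(\<integral>\<^sup>+ x. ennreal (mf N x) \<partial>count_space UNIV) = ennreal (real (card (TT N)) / real (card (TT N)))" .
  have "real (card (TT N)) \<noteq> 0" using N by (simp add: card_TT)
  then show "(\<integral>\<^sup>+ x. ennreal (mf N x) \<partial>count_space UNIV) = 1" using eq by simp
qed

lemma key:
  assumes N: "N \<ge> 1"
  shows "pmf_of_set (TT N) = bind_pmf (multinomial_unif_pmf (2 * N) N) (\<lambda>Y. map_pmf (tof N) (pmf_of_set (CC N Y)))"
proof (rule pmf_eqI)
  fix t
  define M where "M = multinomial_unif_pmf (2 * N) N"
  have TTne: "TT N \<noteq> {}"
  proof
    assume "TT N = {}" then have "card (TT N) = 0" by simp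
    then show False using N by (simp add: card_TT)
  qed
  have setM: "Y \<in> SS N" if "Y \<in> set_pmf M" for Y
    using that pmf_mult[OF N, of Y] mf_not_SS[of Y N] by (auto simp: M_def set_pmf_eq)
  have CCne: "CC N Y \<noteq> {}" if "Y \<in> SS N" for Y
  proof
    assume "CC N Y = {}" then have "card (CC N Y) = 0" by simp
    then show False using card_CC[OF that] by simp
  qed
  have g: "pmf (map_pmf (tof N) (pmf_of_set (CC N Y))) t =
      real (card {\<sigma> \<in> CC N Y. tof N \<sigma> = t}) / real (fact (2 * N))" if Y: "Y \<in> SS N" for Y
  proof -
    have "CC N Y \<inter> tof N -` {t} = {\<sigma> \<in> CC N Y. tof N \<sigma> = t}" by auto
    then show ?thesis using CCne[OF Y] card_CC[OF Y]
      by (simp add: pmf_map measure_pmf_of_set)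
  qed
  have empty: "{\<sigma> \<in> CC N Y. tof N \<sigma> = t} = {}" if Y: "Y \<in> SS N" and ne: "\<not> (t \<in> TT N \<and> cnt N t = Y)" for Y
  proof -
    have supp: "\<forall>i. i \<ge> N \<longrightarrow> Y i = 0" using Y by (simp add: SS_def)
    show ?thesis using tof_props[OF _ supp] ne by blast
  qed
  show "pmf (pmf_of_set (TT N)) t = pmf (bind_pmf (multinomial_unif_pmf (2 * N) N) (\<lambda>Y. map_pmf (tof N) (pmf_of_set (CC N Y)))) t"
  proof (cases "t \<in> TT N")
    case True
    define Y0 where "Y0 = cnt N t"
    have Y0: "Y0 \<in> SS N" using cnt_SS[OF True] by (simp add: Y0_def)
    have "pmf (bind_pmf M (\<lambda>Y. map_pmf (tof N) (pmf_of_set (CC N Y)))) t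
        = (\<integral>Y. pmf (map_pmf (tof N) (pmf_of_set (CC N Y))) t \<partial>measure_pmf M)"
      by (rule pmf_bind)
    also have "\<dots> = (\<Sum>Y\<in>{Y0}. pmf (map_pmf (tof N) (pmf_of_set (CC N Y))) t * pmf M Y)"
    proof (rule integral_measure_pmf_real)
      fix Y assume Y: "Y \<in> set_pmf M" and nz: "pmf (map_pmf (tof N) (pmf_of_set (CC N Y))) t \<noteq> 0"
      have YS: "Y \<in> SS N" using setM[OF Y] .
      show "Y \<in> {Y0}"
      proof (rule ccontr)
        assume "Y \<notin> {Y0}"
        then have "\<not> (t \<in> TT N \<and> cnt N t = Y)" by (auto simp: Y0_def)
        then show False using nz g[OF YS] empty[OF YS] by simp
      qed
    qed simp
    also have "\<dots> = (\<Prod>j<N. real (fact (Y0 j))) / real (fact (2 * N)) * mf N Y0"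
      using g[OF Y0] card_Fib[OF True Y0_def[symmetric]] pmf_mult[OF N] by (simp add: M_def of_nat_prod)
    also have "\<dots> = 1 / real (card (TT N))"
    proof -
      have pos: "(\<Prod>i<N. real (fact (Y0 i))) > 0" by (intro prod_pos) simp
      have "mf N Y0 = real (fact (2 * N)) / (\<Prod>i<N. real (fact (Y0 i))) * (1 / real N) ^ (2 * N)"
        using Y0 by (simp add: mf_def SS_def)
      moreover have "(1 / real N) ^ (2 * N) = 1 / real (card (TT N))"
        by (simp add: card_TT power_one_over)
      ultimately show ?thesis using pos by (simp add: field_simps)
    qed
    finally show ?thesis using True finite_TT TTne by (simp add: M_def)
  next
    case False
    have "pmf (bind_pmf M (\<lambda>Y. map_pmf (tof N) (pmf_of_set (CC N Y)))) t
        = (\<integral>Y. pmf (map_pmf (tof N) (pmf_of_set (CC N Y))) t \<partial>measure_pmf M)"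
      by (rule pmf_bind)
    also have "\<dots> = (\<Sum>Y\<in>{}. pmf (map_pmf (tof N) (pmf_of_set (CC N Y))) t * pmf M Y)"
    proof (rule integral_measure_pmf_real)
      fix Y assume Y: "Y \<in> set_pmf M" and nz: "pmf (map_pmf (tof N) (pmf_of_set (CC N Y))) t \<noteq> 0"
      have YS: "Y \<in> SS N" using setM[OF Y] .
      show "Y \<in> {}" using nz g[OF YS] empty[OF YS] False by simp
    qed simp
    finally show ?thesis using False finite_TT TTne by (simp add: M_def)
  qed
qed

theorem proposition2p1:
  fixes N :: nat
  assumes "N \<ge> 1"
  shows "WCM N = bind_pmf (multinomial_unif_pmf (2 * N) N) (\<lambda>Y. DCM N Y (\<lambda>_. 2))"
proof -
  have "bind_pmf (multinomial_unif_pmf (2 * N) N) (\<lambda>Y. DCM N Y (\<lambda>_. 2))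
      = bind_pmf (multinomial_unif_pmf (2 * N) N) (\<lambda>Y. map_pmf (Mx N) (map_pmf (tof N) (pmf_of_set (CC N Y))))"
    by (simp add: DCM_eq)
  also have "\<dots> = map_pmf (Mx N) (bind_pmf (multinomial_unif_pmf (2 * N) N) (\<lambda>Y. map_pmf (tof N) (pmf_of_set (CC N Y))))"
    by (simp add: map_bind_pmf)
  also have "\<dots> = map_pmf (Mx N) (pmf_of_set (TT N))" using key[OF assms] by simp
  also have "\<dots> = WCM N" using WCM_eq[OF assms] by simp
  finally show ?thesis by simp
qed

end
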